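(* Assume (A1)–(A3) and $\alpha=k_{max}/r>1$, and let $LR_{target}>0$ be given. Consider the problem of finding a concentration profile $C$ with $LR_{max}[C]=LR_{target}$ and with $AUC[C]$ as small as possible. Then: (a) The function $f_r(c)=\frac{k(c)-r}{c}$ on $(0,\infty)$ has a unique maximizer $c_{opt}$, which is also the unique solution in $(0,\infty)$ of $k'(c)=\frac{k(c)-r}{c}$. (b) The unique solution (up to equality almost everywhere) of the problem is $$C_{opt}(t)=\begin{cases} c_{opt}, & 0\le t\le T_{opt},\\ 0, & t>T_{opt},\end{cases}\qquad T_{opt}=\frac{\ln(10)\,LR_{target}}{k(c_{opt})-r}.$$ (c) $C_{opt}$ satisfies $LR(T_{opt})=LR_{target}$, and for every concentration profile $C$ with $LR_{max}[C]=LR_{target}$, $$AUC[C]\ \ge\ AUC_{opt}:=T_{opt}\,c_{opt}=\ln(10)\,LR_{target}\,\frac{c_{opt}}{k(c_{opt})-r},$$ with equality iff $C=C_{opt}$ almost everywhere.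
   Context: Let $r>0$ and let $k:[0,\infty)\to[0,\infty)$ satisfy: (A1) $k(0)=0$, $k$ is continuous and strictly increasing on $[0,\infty)$, and twice differentiable on $(0,\infty)$; (A2) $\lim_{c\to\infty}k(c)=k_{max}<\infty$; (A3) either (i) (concave case) $k''(c)<0$ for all $c>0$, or (ii) (sigmoidal case) there is $c_{infl}>0$ with $k''(c)>0$ for $0<c<c_{infl}$ and $k''(c)<0$ for $c>c_{infl}$. Set $\alpha=k_{max}/r$. A concentration profile is a non-negative function $C\in L^1[0,\infty)$. Its area under the curve is $AUC[C]=\int_0^\infty C(t)\,dt$. For $T\ge0$ its log-reduction is $LR(T)=\frac{1}{\ln 10}\int_0^T[k(C(t))-r]\,dt$, and $LR_{max}[C]=\max_{T\ge0}LR(T)$ (this maximum exists). (Interpretation: the microbial population obeys $B'=(r-k(C(t)))B$, and $LR(T)=\log_{10}(B(0)/B(T))$.) *)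

theory Defs
  imports "HOL-Analysis.Analysis"
begin

definition conc_profile :: "(real \<Rightarrow> real) \<Rightarrow> bool" where
  "conc_profile C \<longleftrightarrow> (\<forall>t\<ge>0. C t \<ge> 0) \<and> C integrable_on {0..}"

definition AUC :: "(real \<Rightarrow> real) \<Rightarrow> real" where
  "AUC C = integral {0..} C"

definition LR :: "(real \<Rightarrow> real) \<Rightarrow> real \<Rightarrow> (real \<Rightarrow> real) \<Rightarrow> real \<Rightarrow> real" where
  "LR k r C T = (1 / ln 10) * integral {0..T} (\<lambda>t. k (C t) - r)"

text \<open>The maximum over T >= 0 exists (as stated in the paper), so it coincides with the supremum.\<close>
definition LR_max :: "(real \<Rightarrow> real) \<Rightarrow> real \<Rightarrow> (real \<Rightarrow> real) \<Rightarrow> real" where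
  "LR_max k r C = (SUP T\<in>{0..}. LR k r C T)"

end

theory Submission
  imports Defs
begin


lemma int_zero_negl:
  fixes f :: "real \<Rightarrow> real"
  assumes f: "f integrable_on S" and S: "S \<in> sets lebesgue"
    and nn: "\<And>x. x \<in> S \<Longrightarrow> 0 \<le> f x" and z: "integral S f = 0"
  shows "negligible {x\<in>S. f x \<noteq> 0}"
proof -
  have af: "f absolutely_integrable_on S"
    using nonnegative_absolutely_integrable_1[OF f] nn by blast
  have "(LINT x:S | lebesgue. f x) = 0"
    using set_lebesgue_integral_eq_integral(2)[OF af] z by simp
  then have "(LINT x | lebesgue. indicator S x *\<^sub>R f x) = 0"
    by (simp add: set_lebesgue_integral_def)
  moreover have "integrable lebesgue (\<lambda>x. indicator S x *\<^sub>R f x)"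
    using af by (simp add: set_integrable_def)
  ultimately have "AE x in lebesgue. indicator S x *\<^sub>R f x = 0"
    using integral_nonneg_eq_0_iff_AE[of lebesgue "\<lambda>x. indicator S x *\<^sub>R f x"] nn
    by (auto simp: indicator_def)
  then obtain N where N: "{x \<in> space lebesgue. \<not> indicator S x *\<^sub>R f x = 0} \<subseteq> N"
    "emeasure lebesgue N = 0" "N \<in> sets lebesgue"
    by (auto elim!: AE_E)
  have "negligible N" using N by (simp add: negligible_iff_null_sets null_sets_def)
  moreover have "{x\<in>S. f x \<noteq> 0} \<subseteq> N" using N by (auto simp: indicator_def)
  ultimately show ?thesis using negligible_subset by blast
qed

lemma integrable_sub_nonneg:
  fixes f :: "real \<Rightarrow> real"
  assumes f: "f integrable_on S" and T: "T \<in> sets lebesgue" "T \<subseteq> S"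
    and nn: "\<And>x. x \<in> S \<Longrightarrow> 0 \<le> f x"
  shows "f integrable_on T"
proof -
  have af: "f absolutely_integrable_on S"
    using nonnegative_absolutely_integrable_1[OF f] nn by blast
  have "f absolutely_integrable_on T"
    using set_integrable_subset[OF af T] .
  then show ?thesis using set_lebesgue_integral_eq_integral(1) by blast
qed

lemma AE_to_negl:
  assumes "AE x in lborel. P x"
  obtains N where "negligible N" "\<And>x. x \<notin> N \<Longrightarrow> P x"
proof -
  have "AE x in lebesgue. P x" using assms by (simp add: AE_completion_iff)
  then obtain N where N: "{x \<in> space lebesgue. \<not> P x} \<subseteq> N"
    "emeasure lebesgue N = 0" "N \<in> sets lebesgue"
    by (auto elim!: AE_E)
  have "negligible N" using N by (simp add: negligible_iff_null_sets null_sets_def)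
  then show ?thesis using that N by auto
qed

lemma negl_to_AE:
  assumes "negligible N" "\<And>x. x \<notin> N \<Longrightarrow> P x"
  shows "AE x in lborel. P x"
proof -
  have "N \<in> null_sets lebesgue" using assms negligible_iff_null_sets by blast
  then have "AE x in lebesgue. x \<notin> N" using AE_not_in by blast
  then have "AE x in lebesgue. P x" by (rule AE_mp) (use assms in auto)
  then show ?thesis by (simp add: AE_completion_iff)
qed




locale KL =
  fixes k :: "real \<Rightarrow> real" and r kmax :: real
  assumes r_pos: "r > 0"
    and k0: "k 0 = 0"
    and kcont: "continuous_on {0..} k"
    and kmono: "strict_mono_on {0..} k"
    and kdiff: "\<forall>c>0. k differentiable (at c)"
    and kdiff2: "\<forall>c>0. (deriv k) differentiable (at c)"
    and A2: "(k \<longlongrightarrow> kmax) at_top"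
    and A3: "(\<forall>c>0. deriv (deriv k) c < 0) \<or>
             (\<exists>c_infl>0. (\<forall>c. 0 < c \<and> c < c_infl \<longrightarrow> deriv (deriv k) c > 0) \<and>
                         (\<forall>c>c_infl. deriv (deriv k) c < 0))"
    and kmax_gt: "kmax > r"
begin

definition f :: "real \<Rightarrow> real" where "f c = (k c - r) / c"
definition N :: "real \<Rightarrow> real" where "N c = c * deriv k c - k c + r"

lemma k_der: "c > 0 \<Longrightarrow> (k has_real_derivative deriv k c) (at c)"
  using kdiff DERIV_deriv_iff_real_differentiable by blast

lemma k'_der: "c > 0 \<Longrightarrow> (deriv k has_real_derivative deriv (deriv k) c) (at c)"
  using kdiff2 DERIV_deriv_iff_real_differentiable by blast

lemma N_der: assumes "c > 0" shows "(N has_real_derivative c * deriv (deriv k) c) (at c)"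
proof -
  have m: "((\<lambda>c. c * deriv k c) has_real_derivative
        (1 * deriv k c + deriv (deriv k) c * c)) (at c)"
    using DERIV_mult[OF DERIV_ident k'_der[OF assms]] by simp
  have "((\<lambda>c. c * deriv k c - k c + r) has_real_derivative
        (1 * deriv k c + deriv (deriv k) c * c - deriv k c + 0)) (at c)"
    by (intro DERIV_add DERIV_diff m k_der assms DERIV_const)
  then show ?thesis unfolding N_def[abs_def] by (simp add: mult.commute)
qed

lemma f_der: assumes "c > 0" shows "(f has_real_derivative N c / c^2) (at c)"
proof -
  have "((\<lambda>c. (k c - r) / c) has_real_derivative
        ((deriv k c - 0) * c - (k c - r) * 1) / (c * c)) (at c)"
    by (intro derivative_intros k_der assms) (use assms in auto)
  moreover have "((deriv k c - 0) * c - (k c - r) * 1) / (c * c) = N c / c^2"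
    by (simp add: N_def power2_eq_square algebra_simps)
  ultimately show ?thesis unfolding f_def[abs_def] by simp
qed

lemma kmono_lt: "0 \<le> a \<Longrightarrow> a < b \<Longrightarrow> k a < k b"
  using kmono by (auto simp: strict_mono_on_def)

lemma kmono_le: "0 \<le> a \<Longrightarrow> a \<le> b \<Longrightarrow> k a \<le> k b"
  using kmono_lt by (cases "a = b") (auto intro: less_imp_le)

lemma deriv_nonneg: assumes "c > 0" shows "deriv k c \<ge> 0"
proof (rule ccontr)
  assume "\<not> ?thesis"
  then obtain d where d: "d > 0" "\<And>h. 0 < h \<Longrightarrow> h < d \<Longrightarrow> k (c + h) < k c"
    using DERIV_neg_dec_right[OF k_der[OF assms]] by force
  have "k c < k (c + d/2)" using kmono_lt assms d by auto
  moreover have "k (c + d/2) < k c" using d by auto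
  ultimately show False by linarith
qed

lemma k_le_kmax: assumes "c \<ge> 0" shows "k c \<le> kmax"
proof (rule tendsto_lowerbound[OF A2])
  show "\<forall>\<^sub>F x in at_top. k c \<le> k x"
    using eventually_ge_at_top[of c] by eventually_elim (use assms kmono_le in auto)
qed simp

lemma k_small: obtains \<delta> where "\<delta> > 0" "\<And>c. 0 \<le> c \<Longrightarrow> c < \<delta> \<Longrightarrow> k c < r"
proof -
  have "\<exists>d>0. \<forall>x'\<in>{0..}. dist x' 0 < d \<longrightarrow> dist (k x') (k 0) < r"
    using kcont r_pos unfolding continuous_on_iff by (metis atLeast_iff order_refl)
  then obtain d where "d > 0" "\<forall>x'\<in>{0..}. dist x' 0 < d \<longrightarrow> dist (k x') (k 0) < r" by blast
  then show ?thesis using that[of d] by (force simp: dist_real_def k0 abs_less_iff)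
qed

lemma k_big: obtains c1 where "c1 > 0" "k c1 > r"
proof -
  have "\<forall>\<^sub>F x in at_top. r < k x" using order_tendstoD(1)[OF A2 kmax_gt] .
  then obtain X where "\<And>x. x \<ge> X \<Longrightarrow> r < k x" by (auto simp: eventually_at_top_linorder)
  then show ?thesis using that[of "max X 1"] by auto
qed

lemma c0_ex: obtains c0 where "c0 \<ge> 0" "\<And>c. 0 < c \<Longrightarrow> c \<le> c0 \<Longrightarrow> N c > 0"
   "\<And>c. c > c0 \<Longrightarrow> deriv (deriv k) c < 0"
proof (cases "\<forall>c>0. deriv (deriv k) c < 0")
  case True then show ?thesis using that[of 0] by auto
next
  case False
  then obtain ci where ci: "ci > 0" "\<And>c. 0 < c \<Longrightarrow> c < ci \<Longrightarrow> deriv (deriv k) c > 0"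
      "\<And>c. c > ci \<Longrightarrow> deriv (deriv k) c < 0" using A3 by blast
  have "N c > 0" if c: "0 < c" "c \<le> ci" for c
  proof -
    obtain \<delta> where \<delta>: "\<delta> > 0" "\<And>c. 0 \<le> c \<Longrightarrow> c < \<delta> \<Longrightarrow> k c < r" using k_small by blast
    define c' where "c' = min c \<delta> / 2"
    have c': "0 < c'" "c' < c" "c' < \<delta>" using c \<delta> by (auto simp: c'_def)
    obtain z where z: "c' < z" "z < c" "N c - N c' = (c - c') * (z * deriv (deriv k) z)"
      using MVT2[of c' c N "\<lambda>x. x * deriv (deriv k) x"] N_der c' by force
    have "z * deriv (deriv k) z > 0" using ci z c c' by auto
    then have "(c - c') * (z * deriv (deriv k) z) > 0" using c' mult_pos_pos[of "c - c'" "z * deriv (deriv k) z"] by auto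
    then have "N c > N c'" using z(3) by linarith
    moreover have "N c' \<ge> r - k c'" using deriv_nonneg[of c'] c' by (simp add: N_def)
    moreover have "k c' < r" using \<delta> c' by auto
    ultimately show ?thesis by linarith
  qed
  then show ?thesis using that[of ci] ci by auto
qed

lemma N_unique: assumes "a > 0" "b > 0" "N a = 0" "N b = 0" shows "a = b"
proof -
  obtain c0 where c0: "c0 \<ge> 0" "\<And>c. 0 < c \<Longrightarrow> c \<le> c0 \<Longrightarrow> N c > 0"
   "\<And>c. c > c0 \<Longrightarrow> deriv (deriv k) c < 0" using c0_ex by blast
  have dec: "N y < N x" if xy: "c0 < x" "x < y" for x y
  proof -
    have x0: "0 < x" using xy c0(1) by linarith
    have "\<forall>t. x \<le> t \<and> t \<le> y \<longrightarrow> (N has_real_derivative t * deriv (deriv k) t) (at t)"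
      using x0 N_der by auto
    then obtain z where z: "x < z" "z < y" "N y - N x = (y - x) * (z * deriv (deriv k) z)"
      using MVT2[of x y N "\<lambda>x. x * deriv (deriv k) x"] xy(2) by blast
    have "deriv (deriv k) z < 0" using z(1) xy(1) by (intro c0(3)) linarith
    moreover have "z > 0" using z(1) x0 by linarith
    ultimately have "z * deriv (deriv k) z < 0" by (simp add: mult_pos_neg)
    then have "(y - x) * (z * deriv (deriv k) z) < 0" using xy(2) mult_pos_neg[of "y - x"] by simp
    then show ?thesis using z(3) by linarith
  qed
  have "\<not> a \<le> c0" using c0(2)[of a] assms by auto
  moreover have "\<not> b \<le> c0" using c0(2)[of b] assms by auto
  ultimately have ab: "c0 < a" "c0 < b" by auto
  show ?thesis
  proof (rule ccontr)
    assume "a \<noteq> b"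
    then consider "a < b" | "b < a" by linarith
    then show False
    proof cases
      case 1 then show False using dec[of a b] ab assms by linarith
    next
      case 2 then show False using dec[of b a] ab assms by linarith
    qed
  qed
qed

lemma max_imp_N0: assumes "c > 0" "\<And>x. x > 0 \<Longrightarrow> f x \<le> f c" shows "N c = 0"
proof -
  have "N c / c^2 = 0"
  proof (rule DERIV_local_max[OF f_der[OF assms(1)] assms(1)])
    show "\<forall>y. \<bar>c - y\<bar> < c \<longrightarrow> f y \<le> f c" using assms by auto
  qed
  then show ?thesis using assms by simp
qed

lemma f_max_ex: obtains cs where "cs > 0" "\<And>x. x > 0 \<Longrightarrow> f x \<le> f cs" "f cs > 0"
proof -
  obtain c1 where c1: "c1 > 0" "k c1 > r" using k_big by blast
  define F1 where "F1 = f c1"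
  have F1: "F1 > 0" using c1 by (simp add: F1_def f_def)
  obtain \<delta> where \<delta>: "\<delta> > 0" "\<And>c. 0 \<le> c \<Longrightarrow> c < \<delta> \<Longrightarrow> k c < r" using k_small by blast
  define a where "a = min (\<delta>/2) c1"
  define M where "M = max c1 ((kmax - r) / F1 + 1)"
  have a: "0 < a" "a \<le> c1" "a < \<delta>" using \<delta> c1 by (auto simp: a_def)
  have M: "c1 \<le> M" "(kmax - r) / F1 < M" by (auto simp: M_def)
  have "continuous_on {a..M} k"
    by (rule continuous_on_subset[OF kcont]) (use a in auto)
  then have "continuous_on {a..M} f"
    unfolding f_def[abs_def]
    by (rule continuous_on_divide[OF continuous_on_diff[OF _ continuous_on_const] continuous_on_id])
       (use a in auto)
  then obtain cs where cs: "cs \<in> {a..M}" "\<And>y. y \<in> {a..M} \<Longrightarrow> f y \<le> f cs"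
    using continuous_attains_sup[OF compact_Icc, of a M f] a M by fastforce
  have "c1 \<in> {a..M}" using a M by auto
  then have fcs: "f cs \<ge> F1" using cs(2) unfolding F1_def by blast
  have "f x \<le> f cs" if x: "x > 0" for x
  proof (cases "x < a")
    case True
    then have "k x < r" by (intro \<delta>(2)) (use True a x in auto)
    then have "f x < 0" using x by (simp add: f_def divide_neg_pos)
    then show ?thesis using fcs F1 by linarith
  next
    case False
    show ?thesis
    proof (cases "x \<le> M")
      case True then show ?thesis using False cs by auto
    next
      case xM: False
      have "k x - r \<le> kmax - r" using k_le_kmax x by auto
      also have "kmax - r < F1 * M"
        using M(2) F1 pos_divide_less_eq[of F1 "kmax - r" M] by (simp add: mult.commute)
      also have "F1 * M < F1 * x" using xM F1 by simp
      finally have "f x < F1" using x pos_divide_less_eq[of x "k x - r" F1] by (simp add: f_def mult.commute)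
      then show ?thesis using fcs by linarith
    qed
  qed
  note hx = this
  show ?thesis
  proof (rule that[of cs])
    show "cs > 0" using cs(1) a(1) by simp
    show "\<And>x. x > 0 \<Longrightarrow> f x \<le> f cs" by (rule hx)
    show "f cs > 0" using fcs F1 by linarith
  qed
qed

end



locale KL2 = KL +
  fixes cs :: real
  assumes cs_pos: "cs > 0" and cs_max: "\<And>x. x > 0 \<Longrightarrow> f x \<le> f cs" and fcs_pos: "f cs > 0"
begin

abbreviation "F \<equiv> f cs"

lemma N_cs: "N cs = 0" using max_imp_N0 cs_pos cs_max by blast

lemma ptw_le: assumes "c \<ge> 0" shows "k c - r \<le> F * c"
proof (cases "c = 0")
  case True then show ?thesis using k0 r_pos by simp
next
  case False
  then have "c > 0" using assms by simp
  then have "(k c - r) / c \<le> F" using cs_max f_def by simp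
  then show ?thesis using \<open>c > 0\<close> pos_divide_le_eq[of c "k c - r" F] by (simp add: mult.commute)
qed

lemma ptw_eq: assumes "c \<ge> 0" "k c - r = F * c" shows "c = cs"
proof (cases "c = 0")
  case True then show ?thesis using assms k0 r_pos by simp
next
  case False
  then have c: "c > 0" using assms by simp
  then have "f c = F" using assms(2) by (simp add: f_def)
  then have "N c = 0" using max_imp_N0[OF c] cs_max by simp
  then show ?thesis using N_unique[OF c cs_pos _ N_cs] by simp
qed

lemma k_nonneg: "c \<ge> 0 \<Longrightarrow> k c \<ge> 0" using kmono_le[of 0 c] k0 by simp

lemma kC_int:
  assumes C: "conc_profile C" and T: "T \<ge> 0"
  shows "(\<lambda>t. k (C t) - r) integrable_on {0..T}"
proof -
  have Cnn: "\<And>t. t \<ge> 0 \<Longrightarrow> C t \<ge> 0" and Ci: "C integrable_on {0..}"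
    using C by (auto simp: conc_profile_def)
  have CiT: "C integrable_on {0..T}" by (rule integrable_on_subinterval[OF Ci]) auto
  then have Cm: "C \<in> borel_measurable (lebesgue_on {0..T})" by (rule integrable_imp_measurable)
  define kk where "kk = (\<lambda>x. k (max 0 x))"
  have "continuous_on UNIV (\<lambda>x::real. max 0 x)"
    by (rule continuous_on_max[OF continuous_on_const continuous_on_id])
  then have "continuous_on UNIV kk"
    unfolding kk_def by (rule continuous_on_compose2[OF kcont]) auto
  then have "kk \<in> borel_measurable borel" by (rule borel_measurable_continuous_onI)
  then have "(\<lambda>t. kk (C t)) \<in> borel_measurable (lebesgue_on {0..T})"
    by (rule measurable_compose[OF Cm])
  then have m: "(\<lambda>t. kk (C t) - r) \<in> borel_measurable (lebesgue_on {0..T})" by simp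
  have "(\<lambda>t. kk (C t) - r) integrable_on {0..T}"
  proof (rule measurable_bounded_by_integrable_imp_integrable_real[OF m])
    show "(\<lambda>_. kmax + r) integrable_on {0..T}" by (rule integrable_on_const) simp
    show "{0..T} \<in> sets lebesgue" by simp
    fix t assume "t \<in> {0..T}"
    have "0 \<le> kk (C t)" "kk (C t) \<le> kmax" unfolding kk_def using k_nonneg k_le_kmax by auto
    then show "\<bar>kk (C t) - r\<bar> \<le> kmax + r" using r_pos by linarith
  qed
  then show ?thesis
    by (rule integrable_eq) (use Cnn in \<open>auto simp: kk_def max_def\<close>)
qed

lemma bound_T:
  assumes C: "conc_profile C" and T: "T \<ge> 0"
  shows "integral {0..T} (\<lambda>t. k (C t) - r) \<le> F * integral {0..T} C"
    "integral {0..T} C \<le> AUC C"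
proof -
  have Cnn: "\<And>t. t \<ge> 0 \<Longrightarrow> C t \<ge> 0" and Ci: "C integrable_on {0..}"
    using C by (auto simp: conc_profile_def)
  have CiT: "C integrable_on {0..T}" by (rule integrable_on_subinterval[OF Ci]) auto
  have "integral {0..T} (\<lambda>t. k (C t) - r) \<le> integral {0..T} (\<lambda>t. F * C t)"
    by (rule integral_le[OF kC_int[OF C T]]) (use integrable_on_cmult_left[OF CiT, of F] Cnn ptw_le in auto)
  then show "integral {0..T} (\<lambda>t. k (C t) - r) \<le> F * integral {0..T} C" by simp
  show "integral {0..T} C \<le> AUC C" unfolding AUC_def
    by (rule integral_subset_le[OF _ CiT Ci]) (use Cnn in auto)
qed

lemma LR_bound:
  assumes C: "conc_profile C" and T: "T \<ge> 0"
  shows "LR k r C T \<le> F * AUC C / ln 10"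
proof -
  have "integral {0..T} (\<lambda>t. k (C t) - r) \<le> F * AUC C"
    using bound_T[OF C T] fcs_pos by (meson mult_left_mono less_imp_le order_trans)
  then show ?thesis unfolding LR_def by (simp add: divide_right_mono)
qed

lemma LRmax_bound:
  assumes C: "conc_profile C"
  shows "LR_max k r C \<le> F * AUC C / ln 10"
  unfolding LR_max_def by (rule cSUP_least) (use LR_bound[OF C] in auto)

lemma LR_bdd: "conc_profile C \<Longrightarrow> bdd_above ((\<lambda>T. LR k r C T) ` {0..})"
  using LR_bound by (auto intro!: bdd_aboveI2)

end



context KL2 begin

lemma eq_case:
  assumes C: "conc_profile C" and Lt: "LR_max k r C = Lt" and A: "AUC C = ln 10 * Lt / F"
  shows "\<exists>U\<ge>0. negligible {t\<in>{0..U}. C t \<noteq> cs} \<and> negligible {t\<in>{U..}. C t \<noteq> 0} \<and> U = AUC C / cs"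
proof -
  have Cnn: "\<And>t. t \<ge> 0 \<Longrightarrow> C t \<ge> 0" and Ci: "C integrable_on {0..}"
    using C by (auto simp: conc_profile_def)
  have CiT: "\<And>U. C integrable_on {0..U}" by (rule integrable_on_subinterval[OF Ci]) auto
  define a where "a = AUC C"
  have a_nn: "a \<ge> 0" unfolding a_def AUC_def by (rule integral_nonneg[OF Ci]) (use Cnn in auto)
  have Fa: "F * a = ln 10 * Lt" using A fcs_pos by (simp add: a_def)
  define d where "d = (\<lambda>t. F * C t - (k (C t) - r))"
  have dint: "d integrable_on {0..U}" if "U \<ge> 0" for U
    unfolding d_def
    by (rule integrable_diff[OF _ kC_int[OF C that]]) (use integrable_on_cmult_left[OF CiT, of F] in simp)
  have dnn: "d t \<ge> 0" if "t \<ge> 0" for t using ptw_le[OF Cnn[OF that]] by (simp add: d_def)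
  have dzero: "C t = cs" if "t \<ge> 0" "d t = 0" for t
    using ptw_eq[OF Cnn[OF that(1)]] that(2) by (simp add: d_def)
  define \<Phi> where "\<Phi> = (\<lambda>U. integral {0..U} d + F * (a - integral {0..U} C))"
  have intd_nn: "integral {0..U} d \<ge> 0" if "U \<ge> 0" for U
    by (rule integral_nonneg[OF dint[OF that]]) (use dnn in auto)
  have intC_le: "integral {0..U} C \<le> a" if "U \<ge> 0" for U using bound_T(2)[OF C that] a_def by simp
  have \<Phi>nn: "\<Phi> U \<ge> 0" if "U \<ge> 0" for U
    unfolding \<Phi>_def using intd_nn[OF that] intC_le[OF that] fcs_pos by simp
  have LRid: "LR k r C U = Lt - \<Phi> U / ln 10" if U: "U \<ge> 0" for U
  proof -
    have "integral {0..U} (\<lambda>t. k (C t) - r) = integral {0..U} (\<lambda>t. F * C t - d t)"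
      by (simp add: d_def)
    also have "\<dots> = integral {0..U} (\<lambda>t. F * C t) - integral {0..U} d"
      by (rule integral_diff[OF _ dint[OF U]]) (use integrable_on_cmult_left[OF CiT, of F] in simp)
    also have "\<dots> = F * integral {0..U} C - integral {0..U} d" by simp
    finally have e: "integral {0..U} (\<lambda>t. k (C t) - r) = F * integral {0..U} C - integral {0..U} d" .
    have "ln 10 > (0::real)" by simp
    then show ?thesis unfolding LR_def e \<Phi>_def using Fa
      by (simp add: field_simps)
  qed
  have small: "\<exists>U\<ge>0. \<Phi> U < e" if e: "e > 0" for e
  proof (rule ccontr)
    assume "\<not> ?thesis"
    then have h: "\<And>U. U \<ge> 0 \<Longrightarrow> e \<le> \<Phi> U" by force
    have "LR_max k r C \<le> Lt - e / ln 10" unfolding LR_max_def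
    proof (rule cSUP_least)
      fix U assume "U \<in> {0::real..}"
      then have "U \<ge> 0" by simp
      then show "LR k r C U \<le> Lt - e / ln 10"
        using LRid h[of U] by (simp add: divide_right_mono)
    qed simp
    moreover have "e / ln 10 > 0" using e by simp
    ultimately show False using Lt by linarith
  qed
  define T1 where "T1 = a / cs + 1"
  have T1: "T1 > 0" using a_nn cs_pos by (simp add: T1_def add_nonneg_pos)
  define \<delta> where "\<delta> = integral {0..T1} d"
  have \<delta>pos: "\<delta> > 0"
  proof (rule ccontr)
    assume "\<not> \<delta> > 0"
    then have "integral {0..T1} d = 0" using intd_nn[of T1] T1 by (simp add: \<delta>_def)
    then have neg: "negligible {x\<in>{0..T1}. d x \<noteq> 0}"
      by (intro int_zero_negl dint) (use T1 dnn in auto)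
    have "integral {0..T1} C = integral {0..T1} (\<lambda>_. cs)"
      by (rule integral_spike[OF neg]) (use dzero in auto)
    also have "\<dots> = T1 * cs" using T1 by simp
    also have "\<dots> = a + cs" using cs_pos by (simp add: T1_def field_simps)
    finally show False using intC_le[of T1] T1 cs_pos by simp
  qed
  have big: "\<Phi> U \<ge> \<delta>" if U: "U \<ge> T1" for U
  proof -
    have U0: "U \<ge> 0" using U T1 by simp
    have "\<delta> \<le> integral {0..U} d" unfolding \<delta>_def
      by (rule integral_subset_le[OF _ dint dint]) (use U T1 dnn in auto)
    moreover have "F * (a - integral {0..U} C) \<ge> 0"
      using intC_le[OF U0] fcs_pos by (intro mult_nonneg_nonneg) auto
    ultimately show ?thesis unfolding \<Phi>_def by linarith
  qed
  have "continuous_on {0..T1} (\<lambda>x. integral {0..x} d)"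
    by (rule indefinite_integral_continuous_1[OF dint]) (use T1 in simp)
  moreover have "continuous_on {0..T1} (\<lambda>x. integral {0..x} C)"
    by (rule indefinite_integral_continuous_1[OF CiT])
  ultimately have "continuous_on {0..T1} \<Phi>" unfolding \<Phi>_def
    by (intro continuous_on_add continuous_on_mult continuous_on_const continuous_on_diff)
  then obtain U0 where U0: "U0 \<in> {0..T1}" "\<And>y. y \<in> {0..T1} \<Longrightarrow> \<Phi> U0 \<le> \<Phi> y"
    using continuous_attains_inf[OF compact_Icc, of 0 T1 \<Phi>] T1 by fastforce
  have U0nn: "U0 \<ge> 0" using U0 by simp
  have \<Phi>0: "\<Phi> U0 = 0"
  proof (rule ccontr)
    assume "\<Phi> U0 \<noteq> 0"
    then have p: "\<Phi> U0 > 0" using \<Phi>nn[OF U0nn] by simp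
    obtain U where U: "U \<ge> 0" "\<Phi> U < min (\<Phi> U0) \<delta>" using small[of "min (\<Phi> U0) \<delta>"] p \<delta>pos by auto
    show False
    proof (cases "U \<le> T1")
      case True then show False using U0(2)[of U] U by simp
    next
      case False then show False using big[of U] U by simp
    qed
  qed
  have i1: "integral {0..U0} d = 0" and i2: "integral {0..U0} C = a"
  proof -
    have x: "integral {0..U0} d \<ge> 0" "a - integral {0..U0} C \<ge> 0"
      using intd_nn[OF U0nn] intC_le[OF U0nn] by auto
    have "F * (a - integral {0..U0} C) \<ge> 0" using x fcs_pos by simp
    then have "integral {0..U0} d = 0 \<and> F * (a - integral {0..U0} C) = 0"
      using \<Phi>0 x unfolding \<Phi>_def by linarith
    then show "integral {0..U0} d = 0" "integral {0..U0} C = a" using fcs_pos by auto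
  qed
  have N1: "negligible {x\<in>{0..U0}. d x \<noteq> 0}"
    by (intro int_zero_negl dint i1) (use U0nn dnn in auto)
  have N1': "negligible {t\<in>{0..U0}. C t \<noteq> cs}"
    by (rule negligible_subset[OF N1]) (use dzero in auto)
  have "a = integral {0..U0} (\<lambda>_. cs)"
    unfolding i2[symmetric] by (rule integral_spike[OF N1]) (use dzero in auto)
  also have "\<dots> = U0 * cs" using U0nn by simp
  finally have U0eq: "U0 = a / cs" using cs_pos by (simp add: field_simps)
  have Ci2: "C integrable_on {U0..}"
    by (rule integrable_sub_nonneg[OF Ci]) (use U0nn Cnn in auto)
  have "integral ({0..U0} \<union> {U0..}) C = integral {0..U0} C + integral {U0..} C"
    by (rule integral_Un[OF CiT Ci2]) (use U0nn in \<open>auto intro: negligible_subset[OF negligible_sing[of U0]]\<close>)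
  moreover have "{0..U0} \<union> {U0..} = {0::real..}" using U0nn by auto
  ultimately have "integral {U0..} C = 0" using i2 by (simp add: a_def AUC_def)
  then have N2: "negligible {t\<in>{U0..}. C t \<noteq> 0}"
    by (intro int_zero_negl Ci2) (use U0nn Cnn in auto)
  show ?thesis using U0nn N1' N2 U0eq a_def by blast
qed

end



theorem theorem1:
  fixes k :: "real \<Rightarrow> real" and r kmax LR_target :: real
  assumes r_pos: "r > 0"
    and A1_zero: "k 0 = 0"
    and A1_nonneg: "\<forall>c\<ge>0. k c \<ge> 0"
    and A1_cont: "continuous_on {0..} k"
    and A1_mono: "strict_mono_on {0..} k"
    and A1_diff: "\<forall>c>0. k differentiable (at c)"
    and A1_diff2: "\<forall>c>0. (deriv k) differentiable (at c)"
    and A2: "(k \<longlongrightarrow> kmax) at_top"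
    and A3: "(\<forall>c>0. deriv (deriv k) c < 0) \<or>
             (\<exists>c_infl>0. (\<forall>c. 0 < c \<and> c < c_infl \<longrightarrow> deriv (deriv k) c > 0) \<and>
                         (\<forall>c>c_infl. deriv (deriv k) c < 0))"
    and alpha_gt: "kmax / r > 1"
    and target_pos: "LR_target > 0"
  shows "\<exists>c_opt>0.
     (\<forall>c>0. (k c - r) / c \<le> (k c_opt - r) / c_opt) \<and>
     (\<forall>c>0. (\<forall>x>0. (k x - r) / x \<le> (k c - r) / c) \<longrightarrow> c = c_opt) \<and>
     (\<forall>c>0. deriv k c = (k c - r) / c \<longleftrightarrow> c = c_opt) \<and>
     (let T_opt = ln 10 * LR_target / (k c_opt - r);
          C_opt = (\<lambda>t::real. if 0 \<le> t \<and> t \<le> T_opt then c_opt else 0)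
      in k c_opt > r \<and>
         conc_profile C_opt \<and>
         LR k r C_opt T_opt = LR_target \<and>
         LR_max k r C_opt = LR_target \<and>
         AUC C_opt = T_opt * c_opt \<and>
         T_opt * c_opt = ln 10 * LR_target * (c_opt / (k c_opt - r)) \<and>
         (\<forall>C. conc_profile C \<and> LR_max k r C = LR_target \<longrightarrow>
               AUC C \<ge> T_opt * c_opt \<and>
               (AUC C = T_opt * c_opt \<longleftrightarrow>
                  (AE t in lborel. t \<ge> 0 \<longrightarrow> C t = C_opt t))))"
proof -
  have kmax_gt: "kmax > r" using alpha_gt r_pos by (simp add: less_divide_eq)
  interpret KL k r kmax
    by unfold_locales (use assms kmax_gt in auto)
  obtain cs where cs: "cs > 0" "\<And>x. x > 0 \<Longrightarrow> f x \<le> f cs" "f cs > 0" using f_max_ex by blast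
  interpret K2: KL2 k r kmax cs by unfold_locales (use cs in auto)
  define Lt where "Lt = LR_target"
  have Lt: "Lt > 0" using target_pos Lt_def by simp
  have kcs: "k cs > r" using cs(1,3) by (simp add: f_def zero_less_divide_iff)
  define T where "T = ln 10 * Lt / (k cs - r)"
  define Copt where "Copt = (\<lambda>t::real. if 0 \<le> t \<and> t \<le> T then cs else 0)"
  have ln10: "ln 10 > (0::real)" by simp
  have T: "T > 0" unfolding T_def using kcs Lt ln10 by simp
  have Tcs: "T * cs = ln 10 * Lt / f cs" unfolding T_def f_def using cs(1) kcs by (simp add: field_simps)
  have FTcs: "f cs * (T * cs) = ln 10 * Lt" using Tcs cs(3) by simp
  have pa1: "\<forall>c>0. (k c - r) / c \<le> (k cs - r) / cs" using cs(2) by (simp add: f_def)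
  have pa2: "\<forall>c>0. (\<forall>x>0. (k x - r) / x \<le> (k c - r) / c) \<longrightarrow> c = cs"
  proof (intro allI impI)
    fix c :: real assume c: "c > 0" "\<forall>x>0. (k x - r) / x \<le> (k c - r) / c"
    then have "N c = 0" using max_imp_N0[of c] by (simp add: f_def)
    then show "c = cs" using N_unique[OF c(1) cs(1)] K2.N_cs by simp
  qed
  have pa3: "\<forall>c>0. deriv k c = (k c - r) / c \<longleftrightarrow> c = cs"
  proof (intro allI impI)
    fix c :: real assume c: "c > 0"
    have "deriv k c = (k c - r) / c \<longleftrightarrow> N c = 0"
      using c by (simp add: N_def field_simps)
    then show "deriv k c = (k c - r) / c \<longleftrightarrow> c = cs"
      using N_unique[OF c cs(1)] K2.N_cs by auto
  qed
  have Copt_int: "(Copt has_integral T * cs) {0..}"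
  proof -
    have "((\<lambda>_. cs) has_integral T * cs) {0..T}" using has_integral_const_real[of cs 0 T] T by simp
    then have "((\<lambda>x. if x \<in> {0..T} then cs else 0) has_integral T * cs) UNIV"
      by (rule has_integral_restrict_UNIV[THEN iffD2])
    moreover have "(\<lambda>x. if x \<in> {0..T} then cs else 0) = (\<lambda>x. if x \<in> {0..} then Copt x else 0)"
      by (auto simp: Copt_def)
    ultimately have "((\<lambda>x. if x \<in> {0..} then Copt x else 0) has_integral T * cs) UNIV" by simp
    then show ?thesis by (rule has_integral_restrict_UNIV[THEN iffD1])
  qed
  have cp: "conc_profile Copt" unfolding conc_profile_def
    using Copt_int cs(1) by (auto simp: Copt_def)
  have AUCopt: "AUC Copt = T * cs" unfolding AUC_def using Copt_int by (rule integral_unique)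
  have LRT: "LR k r Copt T = Lt"
  proof -
    have "integral {0..T} (\<lambda>t. k (Copt t) - r) = integral {0..T} (\<lambda>t. k cs - r)"
      by (rule integral_cong) (auto simp: Copt_def)
    also have "\<dots> = T * (k cs - r)" using T by simp
    also have "\<dots> = ln 10 * Lt" unfolding T_def using kcs by simp
    finally show ?thesis unfolding LR_def by simp
  qed
  have LRM: "LR_max k r Copt = Lt"
    unfolding LR_max_def
  proof (rule cSup_eq_maximum)
    show "Lt \<in> (\<lambda>T. LR k r Copt T) ` {0..}" using LRT T by (auto intro!: image_eqI[of _ _ T])
    fix x assume "x \<in> (\<lambda>T. LR k r Copt T) ` {0..}"
    then obtain U where "U \<ge> 0" "x = LR k r Copt U" by auto
    then show "x \<le> Lt" using K2.LR_bound[OF cp, of U] AUCopt FTcs by simp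
  qed
  have eqform: "T * cs = ln 10 * Lt * (cs / (k cs - r))" unfolding T_def by simp
  have main: "AUC C \<ge> T * cs \<and> (AUC C = T * cs \<longleftrightarrow> (AE t in lborel. t \<ge> 0 \<longrightarrow> C t = Copt t))"
    if C: "conc_profile C" "LR_max k r C = Lt" for C
  proof
    have "Lt \<le> f cs * AUC C / ln 10" using K2.LRmax_bound[OF C(1)] C(2) by simp
    then have "ln 10 * Lt \<le> f cs * AUC C" using ln10 by (simp add: field_simps)
    then have "ln 10 * Lt \<le> AUC C * f cs" by (simp only: mult.commute)
    then show ge: "AUC C \<ge> T * cs" unfolding Tcs using pos_divide_le_eq[OF cs(3)] by simp
    show "AUC C = T * cs \<longleftrightarrow> (AE t in lborel. t \<ge> 0 \<longrightarrow> C t = Copt t)"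
    proof
      assume eq: "AUC C = T * cs"
      have "AUC C = ln 10 * Lt / f cs" using eq Tcs by simp
      then have "\<exists>U\<ge>0. negligible {t\<in>{0..U}. C t \<noteq> cs} \<and> negligible {t\<in>{U..}. C t \<noteq> 0} \<and> U = AUC C / cs"
        by (rule K2.eq_case[OF C(1) C(2)])
      then obtain U where U: "U \<ge> 0" "negligible {t\<in>{0..U}. C t \<noteq> cs}" "negligible {t\<in>{U..}. C t \<noteq> 0}"
        "U = AUC C / cs" by blast
      have UT: "U = T" using U(4) eq cs(1) by simp
      show "AE t in lborel. t \<ge> 0 \<longrightarrow> C t = Copt t"
      proof (rule negl_to_AE[OF negligible_Un[OF U(2) U(3)]])
        fix x assume "x \<notin> {t\<in>{0..U}. C t \<noteq> cs} \<union> {t\<in>{U..}. C t \<noteq> 0}"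
        then show "x \<ge> 0 \<longrightarrow> C x = Copt x" using UT by (auto simp: Copt_def)
      qed
    next
      assume ae: "AE t in lborel. t \<ge> 0 \<longrightarrow> C t = Copt t"
      then obtain N where N: "negligible N" "\<And>x. x \<notin> N \<Longrightarrow> x \<ge> 0 \<longrightarrow> C x = Copt x"
        using AE_to_negl[OF ae] by blast
      have "integral {0..} Copt = integral {0..} C"
        by (rule integral_spike[OF N(1)]) (use N(2) in auto)
      then show "AUC C = T * cs" using AUCopt by (simp add: AUC_def)
    qed
  qed
  have main': "\<forall>C. conc_profile C \<and> LR_max k r C = Lt \<longrightarrow>
               AUC C \<ge> T * cs \<and>
               (AUC C = T * cs \<longleftrightarrow>
                  (AE t in lborel. t \<ge> 0 \<longrightarrow> C t = Copt t))"
    using main by blast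
  have G: "cs > 0 \<and> (\<forall>c>0. (k c - r) / c \<le> (k cs - r) / cs) \<and>
     (\<forall>c>0. (\<forall>x>0. (k x - r) / x \<le> (k c - r) / c) \<longrightarrow> c = cs) \<and>
     (\<forall>c>0. deriv k c = (k c - r) / c \<longleftrightarrow> c = cs) \<and>
     (k cs > r \<and>
         conc_profile Copt \<and>
         LR k r Copt T = Lt \<and>
         LR_max k r Copt = Lt \<and>
         AUC Copt = T * cs \<and>
         T * cs = ln 10 * Lt * (cs / (k cs - r)) \<and>
         (\<forall>C. conc_profile C \<and> LR_max k r C = Lt \<longrightarrow>
               AUC C \<ge> T * cs \<and>
               (AUC C = T * cs \<longleftrightarrow>
                  (AE t in lborel. t \<ge> 0 \<longrightarrow> C t = Copt t))))"
    using cs(1) pa1 pa2 pa3 kcs cp LRT LRM AUCopt eqform main' by (intro conjI)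
  then have G': "cs > 0 \<and> (\<forall>c>0. (k c - r) / c \<le> (k cs - r) / cs) \<and>
     (\<forall>c>0. (\<forall>x>0. (k x - r) / x \<le> (k c - r) / c) \<longrightarrow> c = cs) \<and>
     (\<forall>c>0. deriv k c = (k c - r) / c \<longleftrightarrow> c = cs) \<and>
     (let T_opt = ln 10 * LR_target / (k cs - r);
          C_opt = (\<lambda>t::real. if 0 \<le> t \<and> t \<le> T_opt then cs else 0)
      in k cs > r \<and>
         conc_profile C_opt \<and>
         LR k r C_opt T_opt = LR_target \<and>
         LR_max k r C_opt = LR_target \<and>
         AUC C_opt = T_opt * cs \<and>
         T_opt * cs = ln 10 * LR_target * (cs / (k cs - r)) \<and>
         (\<forall>C. conc_profile C \<and> LR_max k r C = LR_target \<longrightarrow>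
               AUC C \<ge> T_opt * cs \<and>
               (AUC C = T_opt * cs \<longleftrightarrow>
                  (AE t in lborel. t \<ge> 0 \<longrightarrow> C t = C_opt t))))"
    unfolding Let_def Copt_def T_def Lt_def .
  then show ?thesis by (rule exI[of _ cs])
qed


end
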